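(* Let $0<\delta<1$ and let $G$ be a $d$-regular graph on $n$ vertices whose second largest adjacency eigenvalue satisfies $\lambda_2\le\delta d$ (in particular, this holds for any $(n,d,\lambda)$-graph with $\lambda<\delta d$). Then, with activation threshold $r=2$, every set of vertices of size larger than $\frac{n}{(1-\delta)d}$ is contagious.
   Context: Bootstrap percolation with threshold $r\ge 2$ on a graph $G=(V,E)$: given a set $A_0\subseteq V$ of seeds, define for $i\ge1$ $A_i=A_{i-1}\cup\{v:|N(v)\cap A_{i-1}|\ge r\}$, where $N(v)$ is the set of neighbors of $v$, and $\langle A_0\rangle=\bigcup_i A_i$. The set $A_0$ is contagious if $\langle A_0\rangle=V$. The adjacency eigenvalues are ordered $d=\lambda_1\ge\lambda_2\ge\dots\ge\lambda_n$; an $(n,d,\lambda)$-graph is a $d$-regular $n$-vertex graph with $\max\{|\lambda_2|,|\lambda_n|\}\le\lambda$. *)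

theory Defs
  imports "Jordan_Normal_Form.Char_Poly" "HOL-Library.Multiset"
begin

definition simple_graph :: "nat \<Rightarrow> (nat \<Rightarrow> nat \<Rightarrow> bool) \<Rightarrow> bool" where
  "simple_graph n E \<longleftrightarrow> (\<forall>u v. E u v \<longrightarrow> u < n \<and> v < n) \<and>
                         (\<forall>u v. E u v \<longrightarrow> E v u) \<and> (\<forall>v. \<not> E v v)"

definition nbrs :: "nat \<Rightarrow> (nat \<Rightarrow> nat \<Rightarrow> bool) \<Rightarrow> nat \<Rightarrow> nat set" where
  "nbrs n E v = {u. u < n \<and> E v u}"

definition regular :: "nat \<Rightarrow> (nat \<Rightarrow> nat \<Rightarrow> bool) \<Rightarrow> nat \<Rightarrow> bool" where
  "regular n E d \<longleftrightarrow> (\<forall>v<n. card (nbrs n E v) = d)"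

definition adj_mat :: "nat \<Rightarrow> (nat \<Rightarrow> nat \<Rightarrow> bool) \<Rightarrow> real mat" where
  "adj_mat n E = mat n n (\<lambda>(i,j). if E i j then 1 else 0)"

text \<open>Adjacency eigenvalues (with multiplicity) in non-increasing order:
  lambda_1 = eigs ! 0, lambda_2 = eigs ! 1, ...\<close>
definition adj_eigenvalues :: "nat \<Rightarrow> (nat \<Rightarrow> nat \<Rightarrow> bool) \<Rightarrow> real list" where
  "adj_eigenvalues n E = rev (sorted_list_of_multiset (proots (char_poly (adj_mat n E))))"

definition bp_step :: "nat \<Rightarrow> (nat \<Rightarrow> nat \<Rightarrow> bool) \<Rightarrow> nat \<Rightarrow> nat set \<Rightarrow> nat set" where
  "bp_step n E r A = A \<union> {v. v < n \<and> card (nbrs n E v \<inter> A) \<ge> r}"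

definition bp_closure :: "nat \<Rightarrow> (nat \<Rightarrow> nat \<Rightarrow> bool) \<Rightarrow> nat \<Rightarrow> nat set \<Rightarrow> nat set" where
  "bp_closure n E r A0 = (\<Union>i. (bp_step n E r ^^ i) A0)"

definition contagious :: "nat \<Rightarrow> (nat \<Rightarrow> nat \<Rightarrow> bool) \<Rightarrow> nat \<Rightarrow> nat set \<Rightarrow> bool" where
  "contagious n E r A0 \<longleftrightarrow> bp_closure n E r A0 = {0..<n}"

end

theory Submission
  imports Defs "Jordan_Normal_Form.Schur_Decomposition"
begin


lemma conj_real[simp]: "conjugate (x::real) = x"
  by (simp add: conjugate_real_def)

lemma cscalar_real: "(v::real vec) \<bullet>c w = v \<bullet> w"
  unfolding scalar_prod_def by simp

lemma ortho_completion:
  fixes v :: "real vec"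
  assumes v: "v \<in> carrier_vec n" and vv: "v \<bullet> v = 1"
  shows "\<exists>W \<in> carrier_mat n n. transpose_mat W * W = 1\<^sub>m n \<and> col W 0 = v"
proof -
  interpret cof_vec_space n "TYPE(real)" .
  have v0: "v \<noteq> 0\<^sub>v n" using vv v by auto
  define b where "b = basis_completion v"
  define ws where "ws = gram_schmidt n b"
  from basis_completion[OF v v0, folded b_def]
  have dist_b: "distinct b" 
    and indep: "\<not> lin_dep (set b)" and b: "set b \<subseteq> carrier_vec n" and hdb: "hd b = v" 
    and len_b: "length b = n" by auto
  have n: "n > 0" using v0 v by (cases n) auto
  from hdb len_b n obtain vs where bv: "b = v # vs" by (cases b, auto)
  from gram_schmidt_result[OF b dist_b indep refl, folded ws_def]
  have ws: "set ws \<subseteq> carrier_vec n" "corthogonal ws" "length ws = n" 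
    by (auto simp: len_b)
  from gram_schmidt_hd[OF v, of vs, folded bv] have hdws: "hd ws = v" unfolding ws_def .
  define nm where "nm = (\<lambda>w::real vec. (1 / sqrt (w \<bullet> w)) \<cdot>\<^sub>v w)"
  define ws' where "ws' = map nm ws"
  define W where "W = mat_of_cols n ws'"
  have pos: "ws ! i \<bullet> ws ! i > 0" if "i < n" for i
  proof -
    have "ws ! i \<bullet> ws ! i \<noteq> 0" using corthogonalD[OF ws(2), of i i] that ws(3)
      by (simp add: cscalar_real)
    moreover have "ws ! i \<bullet> ws ! i \<ge> 0" unfolding scalar_prod_def
      by (intro sum_nonneg) auto
    ultimately show ?thesis by linarith
  qed
  have wsc: "ws ! i \<in> carrier_vec n" if "i < n" for i using ws that by auto
  have orth: "ws ! i \<bullet> ws ! j = 0" if "i < n" "j < n" "i \<noteq> j" for i j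
    using corthogonalD[OF ws(2), of i j] that ws(3) by (simp add: cscalar_real)
  have W: "W \<in> carrier_mat n n" unfolding W_def ws'_def using ws by auto
  have colW: "col W i = nm (ws ! i)" if "i < n" for i
    unfolding W_def ws'_def using that ws wsc[OF that] by (auto simp: nm_def)
  have "transpose_mat W * W = 1\<^sub>m n"
  proof (rule eq_matI)
    fix i j assume ij: "i < dim_row (1\<^sub>m n)" "j < dim_col (1\<^sub>m n)"
    hence i: "i < n" and j: "j < n" by auto
    have "(transpose_mat W * W) $$ (i, j) = col W i \<bullet> col W j"
      using W i j by simp
    also have "\<dots> = nm (ws ! i) \<bullet> nm (ws ! j)" using colW i j by simp
    also have "\<dots> = (1 / sqrt (ws!i \<bullet> ws!i)) * (1 / sqrt (ws!j \<bullet> ws!j)) * (ws ! i \<bullet> ws ! j)"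
      unfolding nm_def using wsc[OF i] wsc[OF j] by simp
    also have "\<dots> = 1\<^sub>m n $$ (i, j)"
    proof (cases "i = j")
      case True
      then show ?thesis using pos[OF i] i
        by (simp add: field_simps)
    next
      case False
      then show ?thesis using orth[OF i j] i j by simp
    qed
    finally show "(transpose_mat W * W) $$ (i, j) = 1\<^sub>m n $$ (i, j)" .
  qed (use W in auto)
  moreover have "col W 0 = v"
  proof -
    have "ws ! 0 = v" using hdws n ws(3) by (cases ws) auto
    thus ?thesis using colW[OF n] vv by (simp add: nm_def)
  qed
  ultimately show ?thesis using W by blast
qed



lemma sym_eigen:
  fixes A :: "real mat"
  assumes A: "A \<in> carrier_mat n n" and sym: "transpose_mat A = A" and n: "n > 0"
  shows "\<exists>e v. v \<in> carrier_vec n \<and> v \<bullet> v = 1 \<and> A *\<^sub>v v = e \<cdot>\<^sub>v v"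
proof -
  define Ac where "Ac = map_mat complex_of_real A"
  have Ac: "Ac \<in> carrier_mat n n" using A by (simp add: Ac_def)
  obtain as where cp: "char_poly Ac = (\<Prod>a\<leftarrow>as. [:- a, 1:])" and las: "length as = n"
    using char_poly_factorized[OF Ac] by blast
  obtain a where a: "a \<in> set as" using las n by (cases as) auto
  have "poly (char_poly Ac) a = 0" unfolding cp poly_prod_list
    using a by (auto simp: prod_list_zero_iff)
  hence "eigenvalue Ac a" using eigenvalue_root_char_poly[OF Ac] by simp
  then obtain v where v: "v \<in> carrier_vec n" "v \<noteq> 0\<^sub>v n" "Ac *\<^sub>v v = a \<cdot>\<^sub>v v"
    unfolding eigenvalue_def eigenvector_def using Ac by auto
  have Asym: "A $$ (i,j) = A $$ (j,i)" if "i < n" "j < n" for i j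
    using arg_cong[OF sym, of "\<lambda>M. M $$ (i,j)"] that A by auto
  define S where "S = (\<Sum>i<n. \<Sum>j<n. cnj (v$i) * of_real (A $$ (i,j)) * v$j)"
  define N where "N = (\<Sum>i<n. cnj (v$i) * v$i)"
  have row: "(\<Sum>j<n. of_real (A $$ (i,j)) * v$j) = a * v$i" if "i < n" for i
  proof -
    have "(Ac *\<^sub>v v) $ i = a * v $ i" using v(3) v(1) that by simp
    moreover have "(Ac *\<^sub>v v) $ i = (\<Sum>j<n. of_real (A $$ (i,j)) * v$j)"
      using that Ac v(1) A unfolding Ac_def scalar_prod_def
      by (auto simp: lessThan_atLeast0 scalar_prod_def intro!: sum.cong)
    ultimately show ?thesis by simp
  qed
  have S1: "S = a * N"
  proof -
    have "S = (\<Sum>i<n. cnj (v$i) * (\<Sum>j<n. of_real (A $$ (i,j)) * v$j))"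
      unfolding S_def by (simp add: sum_distrib_left mult.assoc)
    also have "\<dots> = (\<Sum>i<n. a * (cnj (v$i) * v$i))" by (intro sum.cong refl) (simp add: row)
    also have "\<dots> = a * N" unfolding N_def by (simp add: sum_distrib_left)
    finally show ?thesis .
  qed
  have "cnj S = (\<Sum>i<n. \<Sum>j<n. v$i * of_real (A $$ (i,j)) * cnj (v$j))"
    unfolding S_def by (simp add: cnj_sum)
  also have "\<dots> = (\<Sum>j<n. \<Sum>i<n. v$i * of_real (A $$ (i,j)) * cnj (v$j))"
    by (rule sum.swap)
  also have "\<dots> = S" unfolding S_def
    by (intro sum.cong refl) (simp add: Asym mult_ac)
  finally have S2: "cnj S = S" .
  have Nreal: "cnj N = N" unfolding N_def by (simp add: cnj_sum mult_ac)
  have "N \<noteq> 0"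
  proof
    assume N0: "N = 0"
    have "Re N = (\<Sum>i<n. (Re (v$i))\<^sup>2 + (Im (v$i))\<^sup>2)" unfolding N_def
      by (simp add: Re_sum power2_eq_square sum.distrib)
    hence "(\<Sum>i<n. (Re (v$i))\<^sup>2 + (Im (v$i))\<^sup>2) = 0" using N0 by simp
    hence "\<forall>i\<in>{..<n}. (Re (v$i))\<^sup>2 + (Im (v$i))\<^sup>2 = 0" by (subst sum_nonneg_eq_0_iff[symmetric]) auto
    hence "v = 0\<^sub>v n" using v(1) by (intro eq_vecI) (auto simp: complex_eq_iff)
    thus False using v(2) by simp
  qed
  have "cnj a * N = a * N" using S1 S2 Nreal by (simp add: complex_cnj_mult)
  hence ar: "cnj a = a" using \<open>N \<noteq> 0\<close> by simp
  define e where "e = Re a"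
  have ae: "a = of_real e" using ar unfolding e_def by (simp add: complex_eq_iff)
  have "poly (char_poly Ac) (of_real e) = 0" using \<open>poly (char_poly Ac) a = 0\<close> ae by simp
  hence "of_real (poly (char_poly A) e) = (0::complex)"
    unfolding Ac_def of_real_hom.char_poly_hom[OF A] by simp
  hence "poly (char_poly A) e = 0" by simp
  hence "eigenvalue A e" using eigenvalue_root_char_poly[OF A] by simp
  then obtain w where w: "w \<in> carrier_vec n" "w \<noteq> 0\<^sub>v n" "A *\<^sub>v w = e \<cdot>\<^sub>v w"
    unfolding eigenvalue_def eigenvector_def using A by auto
  have wpos: "w \<bullet> w > 0"
  proof -
    have ge: "w \<bullet> w \<ge> 0" unfolding scalar_prod_def by (intro sum_nonneg) auto
    have "w \<bullet> w \<noteq> 0"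
    proof
      assume "w \<bullet> w = 0"
      hence "(\<Sum>i\<in>{0..<n}. w$i * w$i) = 0" using w(1) unfolding scalar_prod_def by simp
      hence "\<forall>i\<in>{0..<n}. w$i * w$i = 0" by (subst sum_nonneg_eq_0_iff[symmetric]) auto
      hence "w = 0\<^sub>v n" using w(1) by (intro eq_vecI) auto
      thus False using w(2) by simp
    qed
    thus ?thesis using ge by linarith
  qed
  define u where "u = (1 / sqrt (w \<bullet> w)) \<cdot>\<^sub>v w"
  have "u \<in> carrier_vec n" using w unfolding u_def by simp
  moreover have "u \<bullet> u = 1" unfolding u_def using w(1) wpos by simp
  moreover have "A *\<^sub>v u = e \<cdot>\<^sub>v u" unfolding u_def
    using w A by (simp add: mult_mat_vec smult_smult_assoc mult.commute)
  ultimately show ?thesis by blast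
qed



lemma quad_index:
  fixes W A :: "real mat"
  assumes W: "W \<in> carrier_mat n n" and A: "A \<in> carrier_mat n n" and i: "i < n" and j: "j < n"
  shows "(transpose_mat W * A * W) $$ (i,j) = col W i \<bullet> (A *\<^sub>v col W j)"
proof -
  have "transpose_mat W * A * W = transpose_mat W * (A * W)" using W A by (simp add: assoc_mult_mat[of _ n n _ n _ n])
  hence "(transpose_mat W * A * W) $$ (i,j) = row (transpose_mat W) i \<bullet> col (A * W) j"
    using W A i j by (simp del: col_mult2)
  also have "col (A * W) j = A *\<^sub>v col W j" by (rule col_mult2[OF A W j])
  also have "row (transpose_mat W) i = col W i" using W i by simp
  finally show ?thesis .
qed

lemma sym_scalar:
  fixes A :: "real mat"
  assumes A: "A \<in> carrier_mat n n" and sym: "transpose_mat A = A"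
    and x: "x \<in> carrier_vec n" and y: "y \<in> carrier_vec n"
  shows "x \<bullet> (A *\<^sub>v y) = (A *\<^sub>v x) \<bullet> y"
  using transpose_vec_mult_scalar[OF A y x] sym x y A
  by (metis comm_scalar_prod mult_mat_vec_carrier)

lemma spectral:
  fixes A :: "real mat"
  assumes "A \<in> carrier_mat n n" "transpose_mat A = A"
  shows "\<exists>U ds. U \<in> carrier_mat n n \<and> transpose_mat U * U = 1\<^sub>m n \<and> length ds = n \<and>
     transpose_mat U * A * U = mat n n (\<lambda>(i,j). if i = j then ds!i else 0)"
  using assms
proof (induction n arbitrary: A)
  case 0
  show ?case by (rule exI[of _ "1\<^sub>m 0"], rule exI[of _ "[]"], auto intro!: eq_matI)
next
  case (Suc m)
  let ?n = "Suc m"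
  have A: "A \<in> carrier_mat ?n ?n" and sym: "transpose_mat A = A" by fact+
  obtain e v where v: "v \<in> carrier_vec ?n" "v \<bullet> v = 1" "A *\<^sub>v v = e \<cdot>\<^sub>v v"
    using sym_eigen[OF A sym] by blast
  obtain W where W: "W \<in> carrier_mat ?n ?n" "transpose_mat W * W = 1\<^sub>m ?n" "col W 0 = v"
    using ortho_completion[OF v(1,2)] by blast
  define A' where "A' = transpose_mat W * A * W"
  have A': "A' \<in> carrier_mat ?n ?n" unfolding A'_def using W A by auto
  have A'ij: "A' $$ (i,j) = col W i \<bullet> (A *\<^sub>v col W j)" if "i < ?n" "j < ?n" for i j
    unfolding A'_def using quad_index[OF W(1) A that] .
  have WW: "col W i \<bullet> col W j = (if i = j then 1 else 0)" if "i < ?n" "j < ?n" for i j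
    using arg_cong[OF W(2), of "\<lambda>M. M $$ (i,j)"] that W(1) by simp
  have A'sym: "A' $$ (i,j) = A' $$ (j,i)" if "i < ?n" "j < ?n" for i j
    unfolding A'ij[OF that] A'ij[OF that(2,1)]
  proof -
    have c1: "col W i \<in> carrier_vec ?n" "col W j \<in> carrier_vec ?n" using W(1) that by auto
    have c2: "A *\<^sub>v col W i \<in> carrier_vec ?n" using A c1 by auto
    show "col W i \<bullet> (A *\<^sub>v col W j) = col W j \<bullet> (A *\<^sub>v col W i)"
      using sym_scalar[OF A sym c1] comm_scalar_prod[OF c2 c1(2)] by simp
  qed
  have A'0: "A' $$ (i,0) = (if i = 0 then e else 0)" if "i < ?n" for i
  proof -
    have "A' $$ (i,0) = col W i \<bullet> (e \<cdot>\<^sub>v col W 0)" using A'ij[OF that] v(3) W(3) by simp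
    also have "\<dots> = e * (col W i \<bullet> col W 0)" using W(1) that by simp
    finally show ?thesis using WW[OF that] by simp
  qed
  define A3 where "A3 = mat m m (\<lambda>(i,j). A' $$ (Suc i, Suc j))"
  have A3: "A3 \<in> carrier_mat m m" unfolding A3_def by simp
  have A3sym: "transpose_mat A3 = A3" unfolding A3_def
    by (rule eq_matI) (auto simp: A'sym)
  obtain U3 ds3 where U3: "U3 \<in> carrier_mat m m" "transpose_mat U3 * U3 = 1\<^sub>m m" "length ds3 = m"
     "transpose_mat U3 * A3 * U3 = mat m m (\<lambda>(i,j). if i = j then ds3!i else 0)"
    using Suc.IH[OF A3 A3sym] by blast
  define E where "E = mat 1 1 (\<lambda>_. e)"
  have E: "E \<in> carrier_mat 1 1" unfolding E_def by simp
  have A'blk: "A' = four_block_mat E (0\<^sub>m 1 m) (0\<^sub>m m 1) A3"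
  proof (rule eq_matI)
    fix i j assume "i < dim_row (four_block_mat E (0\<^sub>m 1 m) (0\<^sub>m m 1) A3)"
      "j < dim_col (four_block_mat E (0\<^sub>m 1 m) (0\<^sub>m m 1) A3)"
    hence i: "i < ?n" and j: "j < ?n" using E A3 by auto
    show "A' $$ (i, j) = four_block_mat E (0\<^sub>m 1 m) (0\<^sub>m m 1) A3 $$ (i, j)"
    proof (cases "i = 0")
      case True
      then show ?thesis using A'0[OF j] A'sym[OF i j] i j E A3 by (simp add: E_def)
    next
      case False
      note i0 = False
      show ?thesis
      proof (cases "j = 0")
        case True
        then show ?thesis using A'0[OF i] i0 i j E A3 by (simp add: E_def)
      next
        case False
        then show ?thesis using i0 i j E A3 by (simp add: A3_def)
      qed
    qed
  qed (use A' E A3 in auto)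
  define B where "B = four_block_mat (1\<^sub>m 1) (0\<^sub>m 1 m) (0\<^sub>m m 1) U3"
  have B: "B \<in> carrier_mat ?n ?n" unfolding B_def using U3 by auto
  have Bt: "transpose_mat B = four_block_mat (1\<^sub>m 1) (0\<^sub>m 1 m) (0\<^sub>m m 1) (transpose_mat U3)"
    unfolding B_def using U3 by (subst transpose_four_block_mat) auto
  define U where "U = W * B"
  have U: "U \<in> carrier_mat ?n ?n" unfolding U_def using W B by auto
  have Ut: "transpose_mat U = transpose_mat B * transpose_mat W"
    unfolding U_def using W B by (simp add: transpose_mult)
  have U3t: "transpose_mat U3 \<in> carrier_mat m m" using U3(1) by simp
  have Btc: "transpose_mat B \<in> carrier_mat ?n ?n" and Wtc: "transpose_mat W \<in> carrier_mat ?n ?n"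
    using B W(1) by auto
  have "transpose_mat U * U = transpose_mat B * (transpose_mat W * (W * B))"
    unfolding Ut unfolding U_def using assoc_mult_mat[OF Btc Wtc mult_carrier_mat[OF W(1) B]] .
  also have "\<dots> = transpose_mat B * ((transpose_mat W * W) * B)"
    using assoc_mult_mat[OF Wtc W(1) B] by simp
  also have "\<dots> = transpose_mat B * B" using W(2) B by simp
  also have "\<dots> = 1\<^sub>m ?n" unfolding Bt unfolding B_def
    using U3 by (subst mult_four_block_mat[OF one_carrier_mat zero_carrier_mat zero_carrier_mat
       U3t one_carrier_mat zero_carrier_mat zero_carrier_mat U3(1)], auto)
  finally have UU: "transpose_mat U * U = 1\<^sub>m ?n" .
  have "transpose_mat U * A * U = (transpose_mat B * (transpose_mat W * A)) * (W * B)"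
    unfolding Ut unfolding U_def using assoc_mult_mat[OF Btc Wtc A] by simp
  also have "\<dots> = transpose_mat B * ((transpose_mat W * A) * (W * B))"
    using assoc_mult_mat[OF Btc mult_carrier_mat[OF Wtc A] mult_carrier_mat[OF W(1) B]] .
  also have "(transpose_mat W * A) * (W * B) = A' * B"
    unfolding A'_def using assoc_mult_mat[OF mult_carrier_mat[OF Wtc A] W(1) B] by simp
  also have "transpose_mat B * (A' * B) = transpose_mat B * A' * B"
    using assoc_mult_mat[OF Btc A' B] by simp
  also have "transpose_mat B * A' = four_block_mat E (0\<^sub>m 1 m) (0\<^sub>m m 1) (transpose_mat U3 * A3)"
    unfolding Bt unfolding A'blk using U3 E A3
    by (subst mult_four_block_mat[OF one_carrier_mat zero_carrier_mat zero_carrier_mat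
       U3t E zero_carrier_mat zero_carrier_mat A3]) auto
  also have "\<dots> * B = four_block_mat E (0\<^sub>m 1 m) (0\<^sub>m m 1) (transpose_mat U3 * A3 * U3)"
    unfolding B_def using U3 E A3
    by (subst mult_four_block_mat[OF E zero_carrier_mat zero_carrier_mat mult_carrier_mat[OF U3t A3]
       one_carrier_mat zero_carrier_mat zero_carrier_mat U3(1)]) auto
  also have "\<dots> = mat ?n ?n (\<lambda>(i,j). if i = j then (e # ds3)!i else 0)"
    unfolding U3(4) E_def by (rule eq_matI) auto
  finally show ?case using U UU U3(3) by (intro exI[of _ U] exI[of _ "e # ds3"]) auto
qed



lemma proots_lin_prod: "proots (\<Prod>e\<leftarrow>ds. [:- e, 1:]) = mset (ds :: real list)"
proof (induction ds)
  case (Cons e ds)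
  have "(\<Prod>e\<leftarrow>ds. [:- e, 1:]) \<noteq> 0" by (auto simp: prod_list_zero_iff)
  hence "proots ([:- e, 1:] * (\<Prod>e\<leftarrow>ds. [:- e, 1:])) = proots [:- e, 1:] + proots (\<Prod>e\<leftarrow>ds. [:- e, 1:])"
    by (intro proots_mult) auto
  thus ?case using Cons by (simp del: mult_pCons_left)
qed simp

lemma sorted_mset_sort: "sorted_list_of_multiset (mset xs) = sort (xs :: real list)"
  by (induction xs) auto

lemma second_bound:
  fixes ds :: "real list"
  assumes i: "i < length ds" and k: "k < length ds" and ik: "i \<noteq> k" and le: "ds!i \<le> ds!k"
  shows "ds!i \<le> rev (sort ds) ! 1"
proof (rule ccontr)
  assume "\<not> ?thesis"
  hence lt: "rev (sort ds) ! 1 < ds!i" by simp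
  define m where "m = ds!i"
  define s where "s = rev (sort ds)"
  have ls: "length s = length ds" unfolding s_def by simp
  have "{j. j < length ds \<and> m \<le> ds!j} \<supseteq> {i,k}" using i k le unfolding m_def by auto
  hence "card {i,k} \<le> card {j. j < length ds \<and> m \<le> ds!j}"
    by (intro card_mono) auto
  hence "card {j. j < length ds \<and> m \<le> ds!j} \<ge> 2" using ik by simp
  hence "length (filter (\<lambda>x. m \<le> x) ds) \<ge> 2" by (simp add: length_filter_conv_card)
  moreover have "length (filter (\<lambda>x. m \<le> x) s) = length (filter (\<lambda>x. m \<le> x) ds)"
  proof -
    have "mset s = mset ds" unfolding s_def by simp
    hence "mset (filter (\<lambda>x. m \<le> x) s) = mset (filter (\<lambda>x. m \<le> x) ds)" by simp
    thus ?thesis by (metis size_mset)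
  qed
  moreover have "{j. j < length s \<and> m \<le> s!j} \<subseteq> {0}"
  proof
    fix j assume j: "j \<in> {j. j < length s \<and> m \<le> s!j}"
    show "j \<in> {0}"
    proof (rule ccontr)
      assume "j \<notin> {0}"
      hence j1: "1 \<le> j" by simp
      have sl: "length (sort ds) = length ds" by simp
      have "s!j = sort ds ! (length ds - Suc j)" "s!1 = sort ds ! (length ds - Suc 1)"
        using j j1 ls unfolding s_def by (auto simp: rev_nth)
      moreover have "sort ds ! (length ds - Suc j) \<le> sort ds ! (length ds - Suc 1)"
        using j j1 ls by (intro sorted_nth_mono) auto
      ultimately have "s!j \<le> s!1" by simp
      thus False using j lt unfolding s_def m_def by auto
    qed
  qed
  hence "card {j. j < length s \<and> m \<le> s!j} \<le> card {0::nat}"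
    by (intro card_mono) auto
  hence "card {j. j < length s \<and> m \<le> s!j} \<le> 1" by simp
  hence "length (filter (\<lambda>x. m \<le> x) s) \<le> 1" by (simp add: length_filter_conv_card)
  ultimately show False by simp
qed



lemma spectral_bound:
  fixes A :: "real mat" and on x :: "real vec" and d :: real
  assumes A: "A \<in> carrier_mat n n" and sym: "transpose_mat A = A"
    and on: "on \<in> carrier_vec n" and Ao: "A *\<^sub>v on = d \<cdot>\<^sub>v on" and oo: "on \<bullet> on > 0"
    and lam: "rev (sorted_list_of_multiset (proots (char_poly A))) ! 1 < d"
    and x: "x \<in> carrier_vec n" and xo: "x \<bullet> on = 0"
  shows "x \<bullet> (A *\<^sub>v x) \<le> rev (sorted_list_of_multiset (proots (char_poly A))) ! 1 * (x \<bullet> x)"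
proof -
  obtain U ds where U: "U \<in> carrier_mat n n" "transpose_mat U * U = 1\<^sub>m n" "length ds = n"
     "transpose_mat U * A * U = mat n n (\<lambda>(i,j). if i = j then ds!i else 0)"
    using spectral[OF A sym] by blast
  define D where "D = mat n n (\<lambda>(i,j). if i = j then ds!i else (0::real))"
  have Dc: "D \<in> carrier_mat n n" unfolding D_def by simp
  have Ut: "transpose_mat U \<in> carrier_mat n n" using U by simp
  have UUt: "U * transpose_mat U = 1\<^sub>m n" using mat_mult_left_right_inverse[OF Ut U(1) U(2)] .
  have AUDU: "A = U * D * transpose_mat U"
  proof -
    have "U * D * transpose_mat U = U * (transpose_mat U * A * U) * transpose_mat U"
      unfolding D_def U(4) ..
    also have "\<dots> = (U * transpose_mat U) * A * (U * transpose_mat U)"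
      using U(1) Ut A by (simp add: assoc_mult_mat[of _ n n _ n _ n])
    also have "\<dots> = A" using UUt A by simp
    finally show ?thesis by simp
  qed
  have "similar_mat A D" unfolding similar_mat_def similar_mat_wit_def
    using A Dc U(1) Ut UUt U(2) AUDU by (intro exI[of _ U] exI[of _ "transpose_mat U"]) (auto simp: Let_def)
  hence "char_poly A = char_poly D" by (rule char_poly_similar)
  also have "\<dots> = (\<Prod>a\<leftarrow>diag_mat D. [:- a, 1:])"
    by (rule char_poly_upper_triangular[OF Dc]) (auto simp: upper_triangular_def D_def)
  also have "diag_mat D = ds" unfolding diag_mat_def D_def using U(3)
    by (intro nth_equalityI) auto
  finally have cp: "char_poly A = (\<Prod>a\<leftarrow>ds. [:- a, 1:])" .
  define lam where "lam = rev (sort ds) ! 1"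
  have lamdef: "rev (sorted_list_of_multiset (proots (char_poly A))) ! 1 = lam"
    unfolding cp proots_lin_prod sorted_mset_sort lam_def ..
  have n: "n > 0" using oo on by (cases n) (auto simp: scalar_prod_def)
  obtain k where k: "k < n" "\<forall>i<n. ds!i \<le> ds!k"
  proof -
    have "set ds \<noteq> {}" using n U(3) by auto
    hence "Max (set ds) \<in> set ds" by simp
    then obtain k where "k < length ds" "ds!k = Max (set ds)" by (metis in_set_conv_nth)
    thus ?thesis using that U(3) by (metis Max_ge List.finite_set nth_mem)
  qed
  have dsl: "ds!i \<le> lam" if "i < n" "i \<noteq> k" for i
    unfolding lam_def using second_bound[of i ds k] that k U(3) by auto
  have Dy: "(D *\<^sub>v y) $ i = ds!i * y$i" if "y \<in> carrier_vec n" "i < n" for y i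
  proof -
    have "(D *\<^sub>v y) $ i = (\<Sum>j\<in>{0..<n}. (if i = j then ds!i else 0) * y$j)"
      using that unfolding D_def by (simp add: scalar_prod_def)
    also have "\<dots> = (\<Sum>j\<in>{0..<n}. if i = j then ds!i * y$i else 0)"
      by (intro sum.cong) auto
    also have "\<dots> = ds!i * y$i" using that by (simp add: sum.delta)
    finally show ?thesis .
  qed
  have quad: "z \<bullet> (A *\<^sub>v z) = (\<Sum>i\<in>{0..<n}. ds!i * ((transpose_mat U *\<^sub>v z) $ i)^2)"
    and norm: "z \<bullet> z = (\<Sum>i\<in>{0..<n}. ((transpose_mat U *\<^sub>v z) $ i)^2)"
    if z: "z \<in> carrier_vec n" for z
  proof -
    define y where "y = transpose_mat U *\<^sub>v z"
    have y: "y \<in> carrier_vec n" unfolding y_def using Ut z by simp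
    have "A *\<^sub>v z = U *\<^sub>v (D *\<^sub>v y)" unfolding AUDU y_def
      using U(1) Dc Ut z by (simp add: assoc_mult_mat_vec[of _ n n _ n z])
    hence "z \<bullet> (A *\<^sub>v z) = y \<bullet> (D *\<^sub>v y)"
      using transpose_vec_mult_scalar[OF U(1), of "D *\<^sub>v y" z] Dc y z unfolding y_def by simp
    also have "\<dots> = (\<Sum>i\<in>{0..<n}. ds!i * (y $ i)^2)"
    proof -
      have "y \<bullet> (D *\<^sub>v y) = (\<Sum>i\<in>{0..<n}. y $ i * (D *\<^sub>v y) $ i)"
        using y Dc by (simp add: scalar_prod_def)
      also have "\<dots> = (\<Sum>i\<in>{0..<n}. ds!i * (y $ i)^2)"
        by (intro sum.cong refl) (simp add: Dy[OF y] power2_eq_square)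
      finally show ?thesis .
    qed
    finally show "z \<bullet> (A *\<^sub>v z) = (\<Sum>i\<in>{0..<n}. ds!i * ((transpose_mat U *\<^sub>v z) $ i)^2)"
      unfolding y_def .
    have "z = U *\<^sub>v y" unfolding y_def using U(1) Ut z UUt
      by (simp add: assoc_mult_mat_vec[of _ n n _ n z, symmetric])
    hence "z \<bullet> z = y \<bullet> y"
      using transpose_vec_mult_scalar[OF U(1), of y z] y z unfolding y_def by simp
    moreover have "y \<bullet> y = (\<Sum>i\<in>{0..<n}. (y $ i)^2)"
      using y by (simp add: scalar_prod_def power2_eq_square)
    ultimately show "z \<bullet> z = (\<Sum>i\<in>{0..<n}. ((transpose_mat U *\<^sub>v z) $ i)^2)"
      unfolding y_def by simp
  qed
  have G: "z \<bullet> (A *\<^sub>v z) \<le> lam * (z \<bullet> z)"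
    if z: "z \<in> carrier_vec n" and zk: "(transpose_mat U *\<^sub>v z) $ k = 0" for z
  proof -
    have "z \<bullet> (A *\<^sub>v z) = (\<Sum>i\<in>{0..<n}. ds!i * ((transpose_mat U *\<^sub>v z) $ i)^2)" by (rule quad[OF z])
    also have "\<dots> \<le> (\<Sum>i\<in>{0..<n}. lam * ((transpose_mat U *\<^sub>v z) $ i)^2)"
    proof (rule sum_mono)
      fix i assume i: "i \<in> {0..<n}"
      show "ds!i * ((transpose_mat U *\<^sub>v z) $ i)^2 \<le> lam * ((transpose_mat U *\<^sub>v z) $ i)^2"
      proof (cases "i = k")
        case True thus ?thesis using zk by simp
      next
        case False thus ?thesis using dsl[of i] i by (intro mult_right_mono) auto
      qed
    qed
    also have "\<dots> = lam * (z \<bullet> z)" unfolding norm[OF z] by (simp add: sum_distrib_left)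
    finally show ?thesis .
  qed
  define w where "w = transpose_mat U *\<^sub>v on"
  define y where "y = transpose_mat U *\<^sub>v x"
  have oAo: "on \<bullet> (A *\<^sub>v on) = d * (on \<bullet> on)" using Ao on by simp
  show ?thesis
  proof (cases "w $ k = 0")
    case True
    have "on \<bullet> (A *\<^sub>v on) \<le> lam * (on \<bullet> on)" using G[OF on] True unfolding w_def by simp
    hence "d * (on \<bullet> on) \<le> lam * (on \<bullet> on)" using oAo by simp
    hence "d \<le> lam" using oo by simp
    thus ?thesis using lam lamdef by simp
  next
    case False
    define a where "a = w $ k"
    define b where "b = - (y $ k)"
    define z where "z = a \<cdot>\<^sub>v x + b \<cdot>\<^sub>v on"
    have z: "z \<in> carrier_vec n" unfolding z_def using x on by simp
    have "transpose_mat U *\<^sub>v z = a \<cdot>\<^sub>v y + b \<cdot>\<^sub>v w" unfolding z_def y_def w_def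
      using Ut x on by (simp add: mult_add_distrib_mat_vec[of _ n n] mult_mat_vec[of _ n n])
    hence zk: "(transpose_mat U *\<^sub>v z) $ k = 0" using k Ut x on unfolding a_def b_def y_def w_def by simp
    have Axc: "A *\<^sub>v x \<in> carrier_vec n" using A x by simp
    have oAx: "on \<bullet> (A *\<^sub>v x) = 0"
    proof -
      have "on \<bullet> (A *\<^sub>v x) = (A *\<^sub>v on) \<bullet> x" by (rule sym_scalar[OF A sym on x])
      also have "\<dots> = d * (on \<bullet> x)" using Ao on x by simp
      also have "on \<bullet> x = 0" using xo comm_scalar_prod[OF x on] by simp
      finally show ?thesis by simp
    qed
    have Az: "A *\<^sub>v z = a \<cdot>\<^sub>v (A *\<^sub>v x) + (b * d) \<cdot>\<^sub>v on" unfolding z_def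
      using A x on Ao by (simp add: mult_add_distrib_mat_vec[of _ n n] mult_mat_vec[of _ n n] smult_smult_assoc)
    have ox: "on \<bullet> x = 0" using xo comm_scalar_prod[OF x on] by simp
    have Qz: "z \<bullet> (A *\<^sub>v z) = a^2 * (x \<bullet> (A *\<^sub>v x)) + b^2 * d * (on \<bullet> on)"
      unfolding Az unfolding z_def using x on Axc xo ox oAx
      by (simp add: add_scalar_prod_distrib[of _ n] scalar_prod_add_distrib[of _ n] power2_eq_square algebra_simps)
    have Nz: "z \<bullet> z = a^2 * (x \<bullet> x) + b^2 * (on \<bullet> on)"
      unfolding z_def using x on xo ox
      by (simp add: add_scalar_prod_distrib[of _ n] scalar_prod_add_distrib[of _ n] power2_eq_square algebra_simps)
    have "a^2 * (x \<bullet> (A *\<^sub>v x)) + b^2 * d * (on \<bullet> on) \<le> lam * (a^2 * (x \<bullet> x) + b^2 * (on \<bullet> on))"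
      using G[OF z zk] Qz Nz by simp
    moreover have "b^2 * lam * (on \<bullet> on) \<le> b^2 * d * (on \<bullet> on)"
      using lam lamdef oo by (intro mult_right_mono mult_left_mono) auto
    ultimately have "a^2 * (x \<bullet> (A *\<^sub>v x)) \<le> a^2 * (lam * (x \<bullet> x))" by (simp add: algebra_simps)
    moreover have "a^2 > 0" using False unfolding a_def by simp
    ultimately have "x \<bullet> (A *\<^sub>v x) \<le> lam * (x \<bullet> x)" by simp
    thus ?thesis using lamdef by simp
  qed
qed



lemma bp_mono_step: "A \<subseteq> bp_step n E r A"
  unfolding bp_step_def by auto

lemma bp_iter_mono: "i \<le> j \<Longrightarrow> (bp_step n E r ^^ i) A0 \<subseteq> (bp_step n E r ^^ j) A0"
proof (induction j)
  case 0 thus ?case by simp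
next
  case (Suc j)
  show ?case
  proof (cases "i = Suc j")
    case True thus ?thesis by simp
  next
    case False
    hence "i \<le> j" using Suc.prems by simp
    thus ?thesis using Suc.IH bp_mono_step[of "(bp_step n E r ^^ j) A0" n E r] by auto
  qed
qed

lemma bp_closed:
  assumes v: "v < n" "v \<notin> bp_closure n E 2 A0"
  shows "card (nbrs n E v \<inter> bp_closure n E 2 A0) \<le> 1"
proof (rule ccontr)
  let ?B = "bp_closure n E 2 A0"
  assume "\<not> ?thesis"
  hence "card (nbrs n E v \<inter> ?B) \<ge> 2" by simp
  moreover have fin0: "finite (nbrs n E v \<inter> ?B)" unfolding nbrs_def by auto
  ultimately have "\<not> (\<forall>a1\<in>nbrs n E v \<inter> ?B. \<forall>a2\<in>nbrs n E v \<inter> ?B. a1 = a2)"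
    using card_le_Suc0_iff_eq[OF fin0] by simp
  then obtain u1 u2 where u: "u1 \<in> nbrs n E v \<inter> ?B" "u2 \<in> nbrs n E v \<inter> ?B" "u1 \<noteq> u2"
    by blast
  obtain i1 where i1: "u1 \<in> (bp_step n E 2 ^^ i1) A0" using u(1) unfolding bp_closure_def by auto
  obtain i2 where i2: "u2 \<in> (bp_step n E 2 ^^ i2) A0" using u(2) unfolding bp_closure_def by auto
  define i where "i = max i1 i2"
  have "u1 \<in> (bp_step n E 2 ^^ i) A0" "u2 \<in> (bp_step n E 2 ^^ i) A0"
    using i1 i2 bp_iter_mono[of i1 i n E 2 A0] bp_iter_mono[of i2 i n E 2 A0] unfolding i_def by auto
  hence sub: "{u1, u2} \<subseteq> nbrs n E v \<inter> (bp_step n E 2 ^^ i) A0" using u by auto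
  have fin: "finite (nbrs n E v \<inter> (bp_step n E 2 ^^ i) A0)" unfolding nbrs_def by auto
  have "2 \<le> card (nbrs n E v \<inter> (bp_step n E 2 ^^ i) A0)"
    using card_mono[OF fin sub] u(3) by simp
  hence "v \<in> (bp_step n E 2 ^^ Suc i) A0" using v(1) unfolding bp_step_def by simp
  thus False using v(2) unfolding bp_closure_def by blast
qed

lemma bp_closure_sub: "A0 \<subseteq> {0..<n} \<Longrightarrow> bp_closure n E r A0 \<subseteq> {0..<n}"
proof -
  assume A0: "A0 \<subseteq> {0..<n}"
  have "(bp_step n E r ^^ i) A0 \<subseteq> {0..<n}" for i
    by (induction i) (use A0 in \<open>auto simp: bp_step_def\<close>)
  thus ?thesis unfolding bp_closure_def by auto
qed

lemma bp_closure_sup: "A0 \<subseteq> bp_closure n E r A0"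
  unfolding bp_closure_def by (metis UNIV_I UN_upper funpow_0)

theorem lemma1:
  fixes n d :: nat and E :: "nat \<Rightarrow> nat \<Rightarrow> bool" and \<delta> :: real and A :: "nat set"
  assumes "simple_graph n E" and "regular n E d" and "d > 0"
    and "0 < \<delta>" and "\<delta> < 1"
    and "adj_eigenvalues n E ! 1 \<le> \<delta> * real d"
    and "A \<subseteq> {0..<n}"
    and "real (card A) > real n / ((1 - \<delta>) * real d)"
  shows "contagious n E 2 A"
proof (rule ccontr)
  assume nc: "\<not> contagious n E 2 A"
  note sg = assms(1)[unfolded simple_graph_def]
  have Esym: "E i j = E j i" for i j using sg by blast
  define B where "B = bp_closure n E 2 A"
  have Bsub: "B \<subseteq> {0..<n}" unfolding B_def using bp_closure_sub[OF assms(7)] .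
  have AB: "A \<subseteq> B" unfolding B_def by (rule bp_closure_sup)
  have "B \<noteq> {0..<n}" using nc unfolding contagious_def B_def by simp
  hence "\<not> {0..<n} \<subseteq> B" using Bsub by blast
  then obtain c where c: "c < n" "c \<notin> B" by (meson atLeastLessThan_iff subsetI)
  define C where "C = {0..<n} - B"
  have finB: "finite B" using Bsub finite_subset by blast
  have cardBC: "card B + card C = n" unfolding C_def using Bsub finB
    by (metis card_Diff_subset card_atLeastLessThan diff_zero le_add_diff_inverse card_mono finite_atLeastLessThan)
  have Cpos: "card C > 0" unfolding C_def using c by (auto simp: card_gt_0_iff)
  have n0: "n > 0" using c by simp
  define a :: "nat \<Rightarrow> nat \<Rightarrow> real" where "a = (\<lambda>i j. if E i j then 1 else 0)"
  have asym: "a i j = a j i" for i j unfolding a_def using Esym by simp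
  have cnt: "(\<Sum>j\<in>{0..<n}. a i j * g j) = real (card {j\<in>{0..<n}. E i j \<and> g j = 1})"
    if "\<And>j. g j = 0 \<or> g j = 1" for i and g :: "nat \<Rightarrow> real"
  proof -
    have "(\<Sum>j\<in>{0..<n}. a i j * g j) = (\<Sum>j\<in>{0..<n}. if E i j \<and> g j = 1 then 1 else 0)"
      by (intro sum.cong refl) (use that in \<open>auto simp: a_def\<close>)
    also have "\<dots> = (\<Sum>j\<in>{j\<in>{0..<n}. E i j \<and> g j = 1}. 1)"
      using sum.inter_filter[of "{0..<n}" "\<lambda>_. 1::real" "\<lambda>j. E i j \<and> g j = 1", symmetric] by simp
    finally show ?thesis by simp
  qed
  have deg: "(\<Sum>j\<in>{0..<n}. a i j) = real d" if "i < n" for i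
  proof -
    have "(\<Sum>j\<in>{0..<n}. a i j) = (\<Sum>j\<in>{0..<n}. a i j * 1)" by simp
    also have "\<dots> = real (card {j\<in>{0..<n}. E i j \<and> (1::real) = 1})" by (rule cnt) simp
    also have "{j\<in>{0..<n}. E i j \<and> (1::real) = 1} = nbrs n E i" unfolding nbrs_def by auto
    finally show ?thesis using assms(2) that unfolding regular_def by simp
  qed
  define f :: "nat \<Rightarrow> real" where "f = (\<lambda>i. if i \<in> B then 1 else 0)"
  have lowdeg: "(\<Sum>j\<in>{0..<n}. a i j * f j) \<le> 1" if "i < n" "i \<notin> B" for i
  proof -
    have "(\<Sum>j\<in>{0..<n}. a i j * f j) = real (card {j\<in>{0..<n}. E i j \<and> f j = 1})"
      by (rule cnt) (simp add: f_def)
    also have "{j\<in>{0..<n}. E i j \<and> f j = 1} = nbrs n E i \<inter> B" unfolding nbrs_def f_def by auto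
    finally show ?thesis using bp_closed[of i n E A] that unfolding B_def by simp
  qed
  define \<beta> where "\<beta> = real (card B) / real n"
  define x :: "nat \<Rightarrow> real" where "x = (\<lambda>i. f i - \<beta>)"
  have sumf: "(\<Sum>i\<in>{0..<n}. f i) = real (card B)"
  proof -
    have "(\<Sum>i\<in>{0..<n}. f i) = (\<Sum>i\<in>{i\<in>{0..<n}. i \<in> B}. 1)"
      unfolding f_def using sum.inter_filter[of "{0..<n}" "\<lambda>_. 1::real" "\<lambda>j. j \<in> B", symmetric] by simp
    also have "{i\<in>{0..<n}. i \<in> B} = B" using Bsub by auto
    finally show ?thesis by simp
  qed
  have ff: "f i * f i = f i" for i by (simp add: f_def)
  have sumf2: "(\<Sum>i\<in>{0..<n}. f i * f i) = real (card B)"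
    using sumf by (simp add: ff)
  have sumx: "(\<Sum>i\<in>{0..<n}. x i) = 0"
    unfolding x_def using sumf n0 by (simp add: sum_subtractf \<beta>_def)
  define X where "X = (\<Sum>i\<in>{0..<n}. x i * x i)"
  have Xval: "X = real (card B) * real (card C) / real n"
  proof -
    have "X = (\<Sum>i\<in>{0..<n}. f i * f i - 2 * \<beta> * f i + \<beta> * \<beta>)"
      unfolding X_def x_def by (intro sum.cong refl) (simp add: algebra_simps)
    also have "\<dots> = real (card B) - 2 * \<beta> * real (card B) + real n * \<beta> * \<beta>"
      by (simp add: sum.distrib sum_subtractf sumf sumf2 sum_distrib_left[symmetric])
    also have "\<dots> = real (card B) * real (card C) / real n"
    proof -
      have rn: "real n = real (card B) + real (card C)" using cardBC by (metis of_nat_add)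
      show ?thesis using n0 unfolding \<beta>_def by (simp add: field_simps, simp add: rn algebra_simps)
    qed
    finally show ?thesis .
  qed
  define Q where "Q = (\<Sum>i\<in>{0..<n}. x i * (\<Sum>j\<in>{0..<n}. a i j * x j))"
  define S where "S = (\<Sum>i\<in>{0..<n}. \<Sum>j\<in>{0..<n}. a i j * (x i - x j)^2)"
  have SQ: "S = 2 * real d * X - 2 * Q"
  proof -
    have "S = (\<Sum>i\<in>{0..<n}. \<Sum>j\<in>{0..<n}. a i j * (x i * x i) + a i j * (x j * x j) - 2 * (x i * (a i j * x j)))"
      unfolding S_def by (intro sum.cong refl) (simp add: algebra_simps power2_eq_square)
    also have "\<dots> = (\<Sum>i\<in>{0..<n}. \<Sum>j\<in>{0..<n}. a i j * (x i * x i))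
        + (\<Sum>i\<in>{0..<n}. \<Sum>j\<in>{0..<n}. a i j * (x j * x j)) - 2 * Q"
      unfolding Q_def by (simp add: sum.distrib sum_subtractf sum_distrib_left)
    also have "(\<Sum>i\<in>{0..<n}. \<Sum>j\<in>{0..<n}. a i j * (x i * x i)) = real d * X"
      unfolding X_def sum_distrib_left
      by (intro sum.cong refl) (simp add: sum_distrib_right[symmetric] deg mult.commute)
    also have "(\<Sum>i\<in>{0..<n}. \<Sum>j\<in>{0..<n}. a i j * (x j * x j)) = (\<Sum>j\<in>{0..<n}. \<Sum>i\<in>{0..<n}. a j i * (x j * x j))"
      by (subst sum.swap) (simp add: asym)
    also have "\<dots> = real d * X"
      unfolding X_def sum_distrib_left
      by (intro sum.cong refl) (simp add: sum_distrib_right[symmetric] deg mult.commute)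
    finally show ?thesis by simp
  qed
  have Sle: "S \<le> 2 * real (card C)"
  proof -
    have dx: "(x i - x j)^2 = f i * (1 - f j) + f j * (1 - f i)" for i j
      unfolding x_def f_def by (auto simp: power2_eq_square)
    have "S = (\<Sum>i\<in>{0..<n}. \<Sum>j\<in>{0..<n}. a i j * (f i * (1 - f j)))
            + (\<Sum>i\<in>{0..<n}. \<Sum>j\<in>{0..<n}. a i j * (f j * (1 - f i)))"
      unfolding S_def dx by (simp add: sum.distrib[symmetric] algebra_simps)
    also have "(\<Sum>i\<in>{0..<n}. \<Sum>j\<in>{0..<n}. a i j * (f i * (1 - f j)))
             = (\<Sum>i\<in>{0..<n}. \<Sum>j\<in>{0..<n}. a i j * (f j * (1 - f i)))"
      by (subst sum.swap) (simp add: asym)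
    also have "(\<Sum>i\<in>{0..<n}. \<Sum>j\<in>{0..<n}. a i j * (f j * (1 - f i)))
             = (\<Sum>i\<in>{0..<n}. (1 - f i) * (\<Sum>j\<in>{0..<n}. a i j * f j))"
      by (simp add: sum_distrib_left mult_ac)
    also have "\<dots> \<le> (\<Sum>i\<in>{0..<n}. (1 - f i))"
    proof (rule sum_mono)
      fix i assume i: "i \<in> {0..<n}"
      show "(1 - f i) * (\<Sum>j\<in>{0..<n}. a i j * f j) \<le> 1 - f i"
        using lowdeg[of i] i by (cases "i \<in> B") (auto simp: f_def)
    qed
    also have "(\<Sum>i\<in>{0..<n}. (1 - f i)) = real (card C)"
      using sumf cardBC by (simp add: sum_subtractf)
    finally show ?thesis by simp
  qed
  define M where "M = adj_mat n E"
  have M: "M \<in> carrier_mat n n" unfolding M_def adj_mat_def by simp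
  have Mij: "M $$ (i,j) = a i j" if "i < n" "j < n" for i j
    unfolding M_def adj_mat_def a_def using that by simp
  have Msym: "transpose_mat M = M" by (rule eq_matI) (use M in \<open>auto simp: Mij asym\<close>)
  define on :: "real vec" where "on = vec n (\<lambda>_. 1)"
  define xv :: "real vec" where "xv = vec n x"
  have on: "on \<in> carrier_vec n" and xv: "xv \<in> carrier_vec n" unfolding on_def xv_def by auto
  have Mv: "(M *\<^sub>v v) $ i = (\<Sum>j\<in>{0..<n}. a i j * v $ j)" if "i < n" "v \<in> carrier_vec n" for i v
    using that M by (simp add: scalar_prod_def Mij)
  have Mon: "M *\<^sub>v on = real d \<cdot>\<^sub>v on"
  proof (rule eq_vecI)
    fix i assume "i < dim_vec (real d \<cdot>\<^sub>v on)"
    hence i: "i < n" using on by simp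
    have "(M *\<^sub>v on) $ i = (\<Sum>j\<in>{0..<n}. a i j * on $ j)" by (rule Mv[OF i on])
    also have "\<dots> = (\<Sum>j\<in>{0..<n}. a i j)" unfolding on_def by (intro sum.cong refl) simp
    also have "\<dots> = real d" by (rule deg[OF i])
    finally show "(M *\<^sub>v on) $ i = (real d \<cdot>\<^sub>v on) $ i" using i on_def by simp
  qed (use M on in auto)
  have onon: "on \<bullet> on > 0" using n0 unfolding on_def by (simp add: scalar_prod_def)
  have lam: "rev (sorted_list_of_multiset (proots (char_poly M))) ! 1 \<le> \<delta> * real d"
    using assms(6) unfolding adj_eigenvalues_def M_def .
  have lamd: "rev (sorted_list_of_multiset (proots (char_poly M))) ! 1 < real d"
    using lam assms(3,5) by (smt (verit) mult_less_cancel_right2 of_nat_0_less_iff)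
  have xon: "xv \<bullet> on = 0" using sumx unfolding xv_def on_def by (simp add: scalar_prod_def)
  have QX: "Q \<le> rev (sorted_list_of_multiset (proots (char_poly M))) ! 1 * X"
  proof -
    have "xv \<bullet> (M *\<^sub>v xv) = Q" unfolding Q_def
    proof -
      have "xv \<bullet> (M *\<^sub>v xv) = (\<Sum>i\<in>{0..<n}. xv $ i * (M *\<^sub>v xv) $ i)"
        using xv M by (simp add: scalar_prod_def)
      also have "\<dots> = (\<Sum>i\<in>{0..<n}. x i * (\<Sum>j\<in>{0..<n}. a i j * x j))"
        by (intro sum.cong refl) (simp add: Mv[OF _ xv], simp add: xv_def)
      finally show "xv \<bullet> (M *\<^sub>v xv) = (\<Sum>i\<in>{0..<n}. x i * (\<Sum>j\<in>{0..<n}. a i j * x j))" .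
    qed
    moreover have "xv \<bullet> xv = X" unfolding X_def xv_def by (simp add: scalar_prod_def)
    ultimately show ?thesis using spectral_bound[OF M Msym on Mon onon lamd xv xon] by simp
  qed
  hence "Q \<le> \<delta> * real d * X"
    using lam Xval by (smt (verit) mult_right_mono divide_nonneg_nonneg of_nat_0_le_iff mult_nonneg_nonneg)
  hence "(1 - \<delta>) * real d * X \<le> real (card C)" using SQ Sle by (simp add: algebra_simps)
  hence "(1 - \<delta>) * real d * real (card B) * real (card C) \<le> real (card C) * real n"
    using Xval n0 by (simp add: field_simps)
  hence "(1 - \<delta>) * real d * real (card B) \<le> real n" using Cpos
    by (simp add: mult.commute mult.left_commute)
  hence "real (card B) \<le> real n / ((1 - \<delta>) * real d)"
    using assms(3,5) by (simp add: field_simps)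
  moreover have "card A \<le> card B" using AB finB by (rule card_mono[rotated])
  ultimately show False using assms(8) by simp
qed

end
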